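(* Let $I=[0,1]$ and let $G$ be a group with an injective homomorphism $\rho: G \to \mathrm{Diff}^1_+(I)$ (so $G$ acts on $I$ via $\rho$). Let $H$ be a finitely generated subgroup of $G$ with generating set $S=\{h_1,\dots,h_n\}$. Let $p\in I$ lie in the frontier of $\mathrm{fix}(H)$, and let $(p_m)$ be a sequence of points of $I\setminus \mathrm{fix}(H)$ with $p_m\to p$. Then there exist sequences $k_m\in\{1,\dots,n\}$ and $e_m\in\{+1,-1\}$ such that for every $h\in[H,H]$ there is an $M$ (depending on $h$) with $$h <_{p_m} h_{k_m}^{e_m}\quad\text{for all } m\ge M,$$ i.e. $h(p_m) < h_{k_m}^{e_m}(p_m)$ for all $m \ge M$.
   Context: $\mathrm{Diff}^1_+(I)$ denotes the group of orientation-preserving $C^1$ diffeomorphisms of the closed interval $I=[0,1]$. For a subgroup $H$ acting on $I$, $\mathrm{fix}(H)$ denotes the set of points of $I$ fixed by every element of $H$, and $[H,H]$ is the commutator subgroup of $H$. For a group $G$ acting on $I$ by orientation-preserving homeomorphisms and a point $q\in I$, the relation $<_q$ on $G$ is defined by: $a <_q b$ if and only if $a(q) < b(q)$ in $I$. *)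

theory Defs
  imports "HOL-Analysis.Analysis" "HOL-Algebra.Algebra"
begin

definition C1_on :: "real set \<Rightarrow> (real \<Rightarrow> real) \<Rightarrow> bool" where
  "C1_on S f \<longleftrightarrow> (\<exists>f'. continuous_on S f' \<and>
      (\<forall>x\<in>S. (f has_real_derivative f' x) (at x within S)))"

definition diff1_plus :: "(real \<Rightarrow> real) \<Rightarrow> bool" where
  "diff1_plus f \<longleftrightarrow> bij_betw f {0..1} {0..1} \<and> C1_on {0..1} f
     \<and> C1_on {0..1} (inv_into {0..1} f) \<and> strict_mono_on {0..1} f"

text \<open>The group Diff^1_+(I) under composition; elements are normalised to be the
  identity outside [0,1] so that equality of functions is equality of diffeomorphisms.\<close>
definition Diff1_plus_group :: "(real \<Rightarrow> real) monoid" where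
  "Diff1_plus_group = \<lparr> carrier = {f. diff1_plus f \<and> (\<forall>x. x \<notin> {0..1} \<longrightarrow> f x = x)},
                        mult = (\<lambda>f g. f \<circ> g), one = id \<rparr>"

definition fixset :: "('a \<Rightarrow> real \<Rightarrow> real) \<Rightarrow> 'a set \<Rightarrow> real set" where
  "fixset \<rho> H = {x \<in> {0..1}. \<forall>g\<in>H. \<rho> g x = x}"

end

theory Submission
  imports Defs
begin

lemma D1_carrier: "f \<in> carrier Diff1_plus_group \<longleftrightarrow> diff1_plus f \<and> (\<forall>x. x \<notin> {0..1} \<longrightarrow> f x = x)"
  by (simp add: Diff1_plus_group_def)

lemma D1_mult: "f \<otimes>\<^bsub>Diff1_plus_group\<^esub> g = f \<circ> g"
  by (simp add: Diff1_plus_group_def)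

lemma D1_maps: "f \<in> carrier Diff1_plus_group \<Longrightarrow> x \<in> {0..1} \<Longrightarrow> f x \<in> {0..1}"
  unfolding D1_carrier diff1_plus_def bij_betw_def by auto

lemma D1_mono: "f \<in> carrier Diff1_plus_group \<Longrightarrow> x \<in> {0..1} \<Longrightarrow> y \<in> {0..1} \<Longrightarrow> x < y \<Longrightarrow> f x < f y"
  unfolding D1_carrier diff1_plus_def strict_mono_on_def by auto

lemma D1_deriv: "f \<in> carrier Diff1_plus_group \<Longrightarrow>
   \<exists>f'. continuous_on {0..1} f' \<and> (\<forall>x\<in>{0..1}. (f has_real_derivative f' x) (at x within {0..1}))"
  unfolding D1_carrier diff1_plus_def C1_on_def by auto

lemma D1_cont: "f \<in> carrier Diff1_plus_group \<Longrightarrow> continuous_on {0..1} f"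
proof -
  assume "f \<in> carrier Diff1_plus_group"
  from D1_deriv[OF this] obtain f' where "\<forall>x\<in>{0..1}. (f has_real_derivative f' x) (at x within {0..1})" by blast
  then show ?thesis
    using DERIV_continuous continuous_on_eq_continuous_within by blast
qed

lemma D1_inj: "f \<in> carrier Diff1_plus_group \<Longrightarrow> inj f"
proof (rule injI)
  fix x y assume f: "f \<in> carrier Diff1_plus_group" and e: "f x = f y"
  have bij: "bij_betw f {0..1} {0..1}" and out: "\<forall>x. x \<notin> {0..1} \<longrightarrow> f x = x"
    using f unfolding D1_carrier diff1_plus_def by auto
  show "x = y"
  proof (cases "x \<in> {0..1}"; cases "y \<in> {0..1}")
    assume "x \<in> {0..1}" "y \<in> {0..1}" then show ?thesis using bij e unfolding bij_betw_def inj_on_def by blast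
  next
    assume "x \<in> {0..1}" "y \<notin> {0..1}" then show ?thesis using D1_maps[OF f] out e by metis
  next
    assume "x \<notin> {0..1}" "y \<in> {0..1}" then show ?thesis using D1_maps[OF f] out e by metis
  next
    assume "x \<notin> {0..1}" "y \<notin> {0..1}" then show ?thesis using out e by metis
  qed
qed

lemma real_lip_bound:
  fixes f f' :: "real \<Rightarrow> real"
  assumes "convex S" "\<And>x. x \<in> S \<Longrightarrow> (f has_real_derivative f' x) (at x within S)"
    "\<And>x. x \<in> S \<Longrightarrow> \<bar>f' x\<bar> \<le> B" "x \<in> S" "y \<in> S"
  shows "\<bar>f x - f y\<bar> \<le> B * \<bar>x - y\<bar>"
proof -
  have "norm (f x - f y) \<le> B * norm (x - y)"
  proof (rule differentiable_bound[OF assms(1) _ _ assms(4,5)])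
    fix z assume z: "z \<in> S"
    show "(f has_derivative (\<lambda>h. f' z * h)) (at z within S)"
      using assms(2)[OF z] by (simp add: has_field_derivative_def)
    show "onorm (\<lambda>h. f' z * h) \<le> B"
    proof (rule onorm_le)
      fix h :: real
      have "\<bar>h\<bar> * \<bar>f' z\<bar> \<le> \<bar>h\<bar> * B" using assms(3)[OF z] by (simp add: mult_left_mono)
      then show "norm (f' z * h) \<le> B * norm h" by (simp add: abs_mult mult.commute)
    qed
  qed
  then show ?thesis by simp
qed

lemma D1_lip: "f \<in> carrier Diff1_plus_group \<Longrightarrow> \<exists>L. \<forall>x\<in>{0..1}. \<forall>y\<in>{0..1}. \<bar>f x - f y\<bar> \<le> L * \<bar>x - y\<bar>"
proof -
  assume "f \<in> carrier Diff1_plus_group"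
  from D1_deriv[OF this] obtain f' where c: "continuous_on {0..1} f'" and d: "\<forall>x\<in>{0..1}. (f has_real_derivative f' x) (at x within {0..1})" by blast
  have "compact (f' ` {0..1::real})" using c compact_continuous_image by blast
  then obtain B where B: "\<forall>z\<in>f' ` {0..1}. norm z \<le> B" using compact_imp_bounded bounded_iff by blast
  have B': "\<And>z. z \<in> {0..1} \<Longrightarrow> \<bar>f' z\<bar> \<le> B" using B by auto
  show ?thesis
    by (rule exI[of _ B]) (intro ballI real_lip_bound[where S="{0..1}" and f'=f'], auto simp: d B')
qed

lemma ev_in01: "eventually (\<lambda>x. x \<in> {0..1::real}) (at p within {0..1})"
  unfolding eventually_at by (rule exI[of _ 1]) auto

locale setting =
  fixes G :: "('a,'b) monoid_scheme" and \<rho> :: "'a \<Rightarrow> real \<Rightarrow> real"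
    and h :: "nat \<Rightarrow> 'a" and n :: nat and p :: real
  assumes grp: "group G" and hom: "\<rho> \<in> hom G Diff1_plus_group"
    and gens: "h ` {1..n} \<subseteq> carrier G"
    and pfix: "p \<in> fixset \<rho> (generate G (h ` {1..n}))"
begin

abbreviation "HH \<equiv> generate G (h ` {1..n})"
abbreviation "FF \<equiv> at p within {0..1::real}"

lemma rho_car: "a \<in> carrier G \<Longrightarrow> \<rho> a \<in> carrier Diff1_plus_group"
  using hom unfolding hom_def by auto

lemma rho_mult: "a \<in> carrier G \<Longrightarrow> b \<in> carrier G \<Longrightarrow> \<rho> (a \<otimes>\<^bsub>G\<^esub> b) = \<rho> a \<circ> \<rho> b"
  using hom unfolding hom_def by (auto simp: D1_mult)

lemma rho_one: "\<rho> \<one>\<^bsub>G\<^esub> = id"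
proof
  fix x
  have o: "\<one>\<^bsub>G\<^esub> \<in> carrier G" using grp by (simp add: group.is_monoid monoid.one_closed)
  have "\<one>\<^bsub>G\<^esub> \<otimes>\<^bsub>G\<^esub> \<one>\<^bsub>G\<^esub> = \<one>\<^bsub>G\<^esub>" using grp o by (simp add: group.is_monoid monoid.l_one)
  then have e: "\<rho> \<one>\<^bsub>G\<^esub> = \<rho> \<one>\<^bsub>G\<^esub> \<circ> \<rho> \<one>\<^bsub>G\<^esub>"
    using rho_mult[OF o o] by simp
  have "\<rho> \<one>\<^bsub>G\<^esub> (\<rho> \<one>\<^bsub>G\<^esub> x) = \<rho> \<one>\<^bsub>G\<^esub> x" using fun_cong[OF e, of x] by simp
  moreover have "inj (\<rho> \<one>\<^bsub>G\<^esub>)" using D1_inj rho_car o by blast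
  ultimately show "\<rho> \<one>\<^bsub>G\<^esub> x = id x" by (simp add: inj_eq)
qed

lemma rho_inv1: "a \<in> carrier G \<Longrightarrow> \<rho> a (\<rho> (inv\<^bsub>G\<^esub> a) x) = x"
proof -
  assume a: "a \<in> carrier G"
  have i: "inv\<^bsub>G\<^esub> a \<in> carrier G" using grp a by (simp add: group.inv_closed)
  have "a \<otimes>\<^bsub>G\<^esub> inv\<^bsub>G\<^esub> a = \<one>\<^bsub>G\<^esub>" using grp a by (simp add: group.r_inv)
  then have "\<rho> a \<circ> \<rho> (inv\<^bsub>G\<^esub> a) = id" using rho_mult[OF a i] rho_one by simp
  then have "(\<rho> a \<circ> \<rho> (inv\<^bsub>G\<^esub> a)) x = id x" by (rule fun_cong)
  then show ?thesis by simp
qed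

lemma rho_inv2: "a \<in> carrier G \<Longrightarrow> \<rho> (inv\<^bsub>G\<^esub> a) (\<rho> a x) = x"
proof -
  assume a: "a \<in> carrier G"
  have i: "inv\<^bsub>G\<^esub> a \<in> carrier G" using grp a by (simp add: group.inv_closed)
  have "inv\<^bsub>G\<^esub> a \<otimes>\<^bsub>G\<^esub> a = \<one>\<^bsub>G\<^esub>" using grp a by (simp add: group.l_inv)
  then have "\<rho> (inv\<^bsub>G\<^esub> a) \<circ> \<rho> a = id" using rho_mult[OF i a] rho_one by simp
  then have "(\<rho> (inv\<^bsub>G\<^esub> a) \<circ> \<rho> a) x = id x" by (rule fun_cong)
  then show ?thesis by simp
qed

lemma HH_sub: "HH \<subseteq> carrier G"
  by (rule subsetI) (rule group.generate_in_carrier[OF grp gens])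

lemma HH_subgroup: "subgroup HH G"
  by (rule group.generate_is_subgroup[OF grp gens])

lemma p01: "p \<in> {0..1}" using pfix unfolding fixset_def by blast

lemma fixp: "a \<in> HH \<Longrightarrow> \<rho> a p = p" using pfix unfolding fixset_def by blast

lemma rmaps: "a \<in> carrier G \<Longrightarrow> x \<in> {0..1} \<Longrightarrow> \<rho> a x \<in> {0..1}"
  using D1_maps rho_car by blast

lemma rcont: "a \<in> carrier G \<Longrightarrow> continuous_on {0..1} (\<rho> a)"
  using D1_cont rho_car by blast

lemma limF: "a \<in> HH \<Longrightarrow> filterlim (\<rho> a) FF FF"
proof (rule filterlim_at_withinI)
  assume a: "a \<in> HH"
  then have ac: "a \<in> carrier G" using HH_sub by blast
  have "((\<rho> a) \<longlongrightarrow> (\<rho> a p)) FF" using rcont[OF ac] p01 continuous_on_def by blast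
  then show "filterlim (\<rho> a) (nhds p) FF" using fixp[OF a] by simp
  have inj: "inj (\<rho> a)" using D1_inj rho_car ac by blast
  have "\<forall>x\<in>{0..1}. x \<noteq> p \<and> dist x p < 1 \<longrightarrow> \<rho> a x \<in> {0..1} - {p}"
  proof (intro ballI impI)
    fix x :: real assume x: "x \<in> {0..1}" "x \<noteq> p \<and> dist x p < 1"
    have "\<rho> a x \<noteq> \<rho> a p" using x inj by (simp add: inj_eq)
    then show "\<rho> a x \<in> {0..1} - {p}" using rmaps[OF ac x(1)] fixp[OF a] by simp
  qed
  then show "eventually (\<lambda>x. \<rho> a x \<in> {0..1} - {p}) FF"
    unfolding eventually_at by (intro exI[of _ 1]) simp
qed

lemma hk_car0: "k \<in> {1..n} \<Longrightarrow> h k \<in> carrier G" using gens by auto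

lemma nonfix_gen: "x \<in> {0..1} \<Longrightarrow> x \<notin> fixset \<rho> HH \<Longrightarrow> \<exists>k\<in>{1..n}. \<rho> (h k) x \<noteq> x"
proof (rule ccontr)
  assume x: "x \<in> {0..1}" "x \<notin> fixset \<rho> HH" and "\<not> (\<exists>k\<in>{1..n}. \<rho> (h k) x \<noteq> x)"
  then have g: "\<And>k. k \<in> {1..n} \<Longrightarrow> \<rho> (h k) x = x" by auto
  have "\<rho> g x = x" if "g \<in> HH" for g
    using that
  proof (induct g rule: generate.induct)
    case one then show ?case by (simp add: rho_one)
  next
    case (incl g) then obtain k where "k \<in> {1..n}" "g = h k" by blast
    then show ?case using g by simp
  next
    case (inv g)
    then obtain k where k: "k \<in> {1..n}" "g = h k" by blast
    then have gc: "g \<in> carrier G" and gx: "\<rho> g x = x" using g hk_car0 by auto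
    have "\<rho> (inv\<^bsub>G\<^esub> g) (\<rho> g x) = x" by (rule rho_inv2[OF gc])
    then show ?case using gx by simp
  next
    case (eng g1 g2)
    then have "g1 \<in> carrier G" "g2 \<in> carrier G" using HH_sub by auto
    then show ?case using eng by (simp add: rho_mult)
  qed
  then have "x \<in> fixset \<rho> HH" unfolding fixset_def using x(1) by blast
  then show False using x(2) by simp
qed

definition phi where "phi k x = \<rho> (h k) x - x"
definition Dm where "Dm x = Max ((\<lambda>(k,e). \<rho> (h k [^]\<^bsub>G\<^esub> (e::int)) x - x) ` ({1..n} \<times> {1,-1}))"
definition del where "del x = (\<Sum>k\<in>{1..n}. \<bar>phi k x\<bar>)"

lemma hk_car: "k \<in> {1..n} \<Longrightarrow> h k \<in> carrier G" using gens by auto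
lemma hk_HH: "k \<in> {1..n} \<Longrightarrow> h k \<in> HH" by (simp add: generate.incl)
lemma hkinv_HH: "k \<in> {1..n} \<Longrightarrow> inv\<^bsub>G\<^esub> (h k) \<in> HH" by (simp add: generate.inv)

lemma Dm_ge1: "k \<in> {1..n} \<Longrightarrow> \<rho> (h k) x - x \<le> Dm x"
proof -
  assume k: "k \<in> {1..n}"
  have "(k, 1::int) \<in> {1..n} \<times> {1,-1}" using k by auto
  then have "\<rho> (h k [^]\<^bsub>G\<^esub> (1::int)) x - x \<in> (\<lambda>(k,e). \<rho> (h k [^]\<^bsub>G\<^esub> (e::int)) x - x) ` ({1..n} \<times> {1,-1})"
    by force
  then show ?thesis unfolding Dm_def using group.int_pow_1[OF grp hk_car[OF k]]
    by (metis (no_types, lifting) Max_ge finite_SigmaI finite_atLeastAtMost finite.emptyI finite_insert finite_imageI)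
qed

lemma Dm_ge2: "k \<in> {1..n} \<Longrightarrow> \<rho> (inv\<^bsub>G\<^esub> (h k)) x - x \<le> Dm x"
proof -
  assume k: "k \<in> {1..n}"
  have "(k, -1::int) \<in> {1..n} \<times> {1,-1}" using k by auto
  then have "\<rho> (h k [^]\<^bsub>G\<^esub> (-1::int)) x - x \<in> (\<lambda>(k,e). \<rho> (h k [^]\<^bsub>G\<^esub> (e::int)) x - x) ` ({1..n} \<times> {1,-1})"
    by force
  moreover have "h k [^]\<^bsub>G\<^esub> (-1::int) = inv\<^bsub>G\<^esub> (h k)"
    using group.int_pow_neg[OF grp hk_car[OF k], of 1] group.int_pow_1[OF grp hk_car[OF k]] by simp
  ultimately show ?thesis unfolding Dm_def
    by (metis (no_types, lifting) Max_ge finite_SigmaI finite_atLeastAtMost finite.emptyI finite_insert finite_imageI)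
qed

lemma inv_gt: "k \<in> {1..n} \<Longrightarrow> x \<in> {0..1} \<Longrightarrow> \<rho> (h k) x < x \<Longrightarrow> x < \<rho> (inv\<^bsub>G\<^esub> (h k)) x"
proof (rule ccontr)
  assume k: "k \<in> {1..n}" and x: "x \<in> {0..1}" and lt: "\<rho> (h k) x < x"
    and "\<not> x < \<rho> (inv\<^bsub>G\<^esub> (h k)) x"
  then have le: "\<rho> (inv\<^bsub>G\<^esub> (h k)) x \<le> x" by simp
  have ic: "inv\<^bsub>G\<^esub> (h k) \<in> carrier G" using grp hk_car[OF k] by (simp add: group.inv_closed)
  have y: "\<rho> (inv\<^bsub>G\<^esub> (h k)) x \<in> {0..1}" using rmaps[OF ic x] .
  have "\<rho> (h k) (\<rho> (inv\<^bsub>G\<^esub> (h k)) x) \<le> \<rho> (h k) x"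
    using le D1_mono[OF rho_car[OF hk_car[OF k]] y x] by (cases "\<rho> (inv\<^bsub>G\<^esub> (h k)) x = x") auto
  then show False using rho_inv1[OF hk_car[OF k]] lt by simp
qed

lemma Dm_pos: "x \<in> {0..1} \<Longrightarrow> x \<notin> fixset \<rho> HH \<Longrightarrow> 0 < Dm x"
proof -
  assume x: "x \<in> {0..1}" "x \<notin> fixset \<rho> HH"
  then obtain k where k: "k \<in> {1..n}" "\<rho> (h k) x \<noteq> x" using nonfix_gen by blast
  show ?thesis
  proof (cases "\<rho> (h k) x > x")
    case True then show ?thesis using Dm_ge1[OF k(1), of x] by simp
  next
    case False then have "\<rho> (h k) x < x" using k by simp
    then show ?thesis using inv_gt[OF k(1) x(1)] Dm_ge2[OF k(1), of x] by simp
  qed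
qed

lemma phi_bound: "\<exists>K>0. \<forall>k\<in>{1..n}. \<forall>x\<in>{0..1}. \<bar>phi k x\<bar> \<le> K * Dm x"
proof -
  have "\<forall>k\<in>{1..n}. \<exists>L. \<forall>x\<in>{0..1}. \<forall>y\<in>{0..1}. \<bar>\<rho> (h k) x - \<rho> (h k) y\<bar> \<le> L * \<bar>x - y\<bar>"
    using D1_lip rho_car hk_car by blast
  then obtain Lf where Lf: "\<And>k x y. k \<in> {1..n} \<Longrightarrow> x \<in> {0..1} \<Longrightarrow> y \<in> {0..1} \<Longrightarrow>
      \<bar>\<rho> (h k) x - \<rho> (h k) y\<bar> \<le> Lf k * \<bar>x - y\<bar>" by metis
  define K where "K = 1 + (\<Sum>k\<in>{1..n}. \<bar>Lf k\<bar>)"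
  have K1: "K \<ge> 1" unfolding K_def by (simp add: sum_nonneg)
  have LK: "\<And>k. k \<in> {1..n} \<Longrightarrow> Lf k \<le> K"
  proof -
    fix k assume "k \<in> {1..n}"
    then have "\<bar>Lf k\<bar> \<le> (\<Sum>k\<in>{1..n}. \<bar>Lf k\<bar>)" by (intro member_le_sum) auto
    then show "Lf k \<le> K" unfolding K_def by simp
  qed
  have "\<bar>phi k x\<bar> \<le> K * Dm x" if k: "k \<in> {1..n}" and x: "x \<in> {0..1}" for k x
  proof (cases "phi k x \<ge> 0")
    case True
    then have "\<bar>phi k x\<bar> \<le> Dm x" "0 \<le> Dm x" using Dm_ge1[OF k, of x] unfolding phi_def by auto
    moreover have "1 * Dm x \<le> K * Dm x" using K1 \<open>0 \<le> Dm x\<close> by (intro mult_right_mono) auto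
    ultimately show ?thesis by simp
  next
    case False
    define y where "y = \<rho> (inv\<^bsub>G\<^esub> (h k)) x"
    have ic: "inv\<^bsub>G\<^esub> (h k) \<in> carrier G" using grp hk_car[OF k] by (simp add: group.inv_closed)
    have y01: "y \<in> {0..1}" unfolding y_def using rmaps[OF ic x] .
    have xy: "x < y" unfolding y_def using inv_gt[OF k x] False unfolding phi_def by simp
    have hy: "\<rho> (h k) y = x" unfolding y_def using rho_inv1[OF hk_car[OF k]] .
    have yD: "y - x \<le> Dm x" unfolding y_def using Dm_ge2[OF k] .
    have "\<bar>phi k x\<bar> = \<rho> (h k) y - \<rho> (h k) x" using False hy unfolding phi_def by simp
    also have "\<dots> \<le> Lf k * \<bar>y - x\<bar>" using Lf[OF k y01 x] by simp
    also have "\<dots> \<le> K * (y - x)" using LK[OF k] xy by (simp add: mult_right_mono)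
    also have "\<dots> \<le> K * Dm x" using yD K1 by simp
    finally show ?thesis .
  qed
  then show ?thesis using K1 by (intro exI[of _ K]) auto
qed

lemma Dm_nonneg: "k \<in> {1..n} \<Longrightarrow> x \<in> {0..1} \<Longrightarrow> 0 \<le> Dm x"
  using Dm_ge1[of k x] Dm_ge2[of k x] inv_gt[of k x] by force

lemma FF_nontriv: "FF \<noteq> bot"
  using p01 trivial_limit_within[of p "{0..1::real}"] islimpt_Icc[of 0 1 p] by simp

lemma deriv_ex: "a \<in> carrier G \<Longrightarrow> \<exists>d. (\<rho> a has_real_derivative d) FF"
  using D1_deriv[OF rho_car] p01 by blast

lemma deriv_comp:
  assumes a: "a \<in> carrier G" and b: "b \<in> HH"
    and da: "(\<rho> a has_real_derivative da) FF" and db: "(\<rho> b has_real_derivative db) FF"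
  shows "(\<rho> (a \<otimes>\<^bsub>G\<^esub> b) has_real_derivative da * db) FF"
proof -
  have bc: "b \<in> carrier G" using b HH_sub by blast
  have "\<rho> b ` {0..1} \<subseteq> {0..1}" using rmaps[OF bc] by blast
  then have "(\<rho> a has_real_derivative da) (at (\<rho> b p) within \<rho> b ` {0..1})"
    using DERIV_subset[OF da] fixp[OF b] by simp
  from DERIV_image_chain[OF this db] show ?thesis using rho_mult[OF a bc] by simp
qed

lemma deriv_inv:
  assumes a: "a \<in> HH" and da: "(\<rho> a has_real_derivative da) FF"
  shows "\<exists>d'. (\<rho> (inv\<^bsub>G\<^esub> a) has_real_derivative d') FF \<and> d' * da = 1"
proof -
  have ac: "a \<in> carrier G" using a HH_sub by blast
  have ic: "inv\<^bsub>G\<^esub> a \<in> carrier G" using grp ac by (simp add: group.inv_closed)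
  obtain d' where d': "(\<rho> (inv\<^bsub>G\<^esub> a) has_real_derivative d') FF" using deriv_ex[OF ic] by blast
  have "(\<rho> (inv\<^bsub>G\<^esub> a \<otimes>\<^bsub>G\<^esub> a) has_real_derivative d' * da) FF" using deriv_comp[OF ic a d' da] .
  moreover have "inv\<^bsub>G\<^esub> a \<otimes>\<^bsub>G\<^esub> a = \<one>\<^bsub>G\<^esub>" using grp ac by (simp add: group.l_inv)
  ultimately have "(id has_real_derivative d' * da) FF" using rho_one by simp
  moreover have "(id has_real_derivative 1) FF" by (simp add: DERIV_ident id_def)
  ultimately have "d' * da = 1" using has_field_derivative_unique FF_nontriv by blast
  then show ?thesis using d' by blast
qed

lemma comm_deriv1: "g \<in> derived_set G HH \<Longrightarrow> (\<rho> g has_real_derivative 1) FF"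
proof -
  assume "g \<in> derived_set G HH"
  then obtain a b where ab: "a \<in> HH" "b \<in> HH" and g: "g = a \<otimes>\<^bsub>G\<^esub> b \<otimes>\<^bsub>G\<^esub> inv\<^bsub>G\<^esub> a \<otimes>\<^bsub>G\<^esub> inv\<^bsub>G\<^esub> b" by blast
  have ac: "a \<in> carrier G" "b \<in> carrier G" using ab HH_sub by auto
  have iH: "inv\<^bsub>G\<^esub> a \<in> HH" "inv\<^bsub>G\<^esub> b \<in> HH" using ab HH_subgroup by (auto intro: subgroup.m_inv_closed)
  have iC: "inv\<^bsub>G\<^esub> a \<in> carrier G" "inv\<^bsub>G\<^esub> b \<in> carrier G" using iH HH_sub by auto
  obtain da db where da: "(\<rho> a has_real_derivative da) FF" and db: "(\<rho> b has_real_derivative db) FF"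
    using deriv_ex ac by blast
  obtain da' db' where da': "(\<rho> (inv\<^bsub>G\<^esub> a) has_real_derivative da') FF" "da' * da = 1"
    and db': "(\<rho> (inv\<^bsub>G\<^esub> b) has_real_derivative db') FF" "db' * db = 1"
    using deriv_inv ab da db by blast
  have m1: "a \<otimes>\<^bsub>G\<^esub> b \<in> carrier G" using grp ac by (simp add: group.is_monoid monoid.m_closed)
  have m2: "a \<otimes>\<^bsub>G\<^esub> b \<otimes>\<^bsub>G\<^esub> inv\<^bsub>G\<^esub> a \<in> carrier G" using grp m1 iC by (simp add: group.is_monoid monoid.m_closed)
  have "(\<rho> g has_real_derivative ((da * db) * da') * db') FF"
    unfolding g by (intro deriv_comp m2 iH m1 deriv_comp ac ab da db da' db')
  moreover have "((da * db) * da') * db' = 1"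
    using da'(2) db'(2) by (metis mult.assoc mult.commute mult.left_neutral)
  ultimately show ?thesis by simp
qed

lemma derived_HH: "derived G HH \<subseteq> HH"
  using group.derived_incl[OF grp, of HH HH] HH_subgroup by simp

lemma derived_deriv1: "g \<in> derived G HH \<Longrightarrow> (\<rho> g has_real_derivative 1) FF"
  unfolding derived_def
proof (induct g rule: generate.induct)
  case one then show ?case using rho_one by (simp add: DERIV_ident id_def)
next
  case (incl g) then show ?case using comm_deriv1 by blast
next
  case (inv g)
  have "g \<in> HH" using inv derived_HH unfolding derived_def by (blast intro: generate.incl)
  then obtain d' where "(\<rho> (inv\<^bsub>G\<^esub> g) has_real_derivative d') FF" "d' * 1 = 1"
    using deriv_inv comm_deriv1[OF inv] by blast
  then show ?case by simp
next
  case (eng g1 g2)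
  have "g1 \<in> HH" "g2 \<in> HH" using eng derived_HH unfolding derived_def by auto
  then have "g1 \<in> carrier G" using HH_sub by auto
  from deriv_comp[OF this \<open>g2 \<in> HH\<close> eng(2) eng(4)] show ?case by simp
qed


lemma ev_ne: "eventually (\<lambda>y. y \<noteq> p \<and> y \<in> {0..1}) FF"
  unfolding eventually_at by (intro exI[of _ 1]) auto

lemma caseA:
  assumes k0: "k0 \<in> {1..n}" and d0: "(\<rho> (h k0) has_real_derivative d0) FF" and ne: "d0 \<noteq> 1"
    and g: "g \<in> derived G HH"
  shows "eventually (\<lambda>x. \<rho> g x - x < Dm x) FF"
proof -
  obtain K where K: "K > 0" "\<And>k x. k \<in> {1..n} \<Longrightarrow> x \<in> {0..1} \<Longrightarrow> \<bar>phi k x\<bar> \<le> K * Dm x"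
    using phi_bound by blast
  have gH: "g \<in> HH" using g derived_HH by blast
  have "((\<lambda>y. (\<rho> g y - \<rho> g p) / (y - p)) \<longlongrightarrow> 1) FF"
    using derived_deriv1[OF g] has_field_derivative_iff by blast
  then have "((\<lambda>y. (\<rho> g y - p) / (y - p) - 1) \<longlongrightarrow> 1 - 1) FF"
    using fixp[OF gH] by (intro tendsto_diff) auto
  then have "((\<lambda>y. (\<rho> g y - p) / (y - p) - 1) \<longlongrightarrow> 0) FF" by simp
  then have t1: "((\<lambda>y. (\<rho> g y - y) / (y - p)) \<longlongrightarrow> 0) FF"
  proof (rule Lim_transform_eventually[OF _ eventually_mono[OF ev_ne]])
    fix y :: real assume "y \<noteq> p \<and> y \<in> {0..1}"
    then have "y - p \<noteq> 0" by simp
    then show "(\<rho> g y - p) / (y - p) - 1 = (\<rho> g y - y) / (y - p)" by (simp add: field_simps)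
  qed
  have "((\<lambda>y. (\<rho> (h k0) y - \<rho> (h k0) p) / (y - p)) \<longlongrightarrow> d0) FF"
    using d0 has_field_derivative_iff by blast
  then have "((\<lambda>y. (\<rho> (h k0) y - p) / (y - p) - 1) \<longlongrightarrow> d0 - 1) FF"
    using fixp[OF hk_HH[OF k0]] by (intro tendsto_diff) auto
  then have t2: "((\<lambda>y. phi k0 y / (y - p)) \<longlongrightarrow> d0 - 1) FF"
  proof (rule Lim_transform_eventually[OF _ eventually_mono[OF ev_ne]])
    fix y :: real assume "y \<noteq> p \<and> y \<in> {0..1}"
    then have "y - p \<noteq> 0" by simp
    then show "(\<rho> (h k0) y - p) / (y - p) - 1 = phi k0 y / (y - p)" by (simp add: field_simps phi_def)
  qed
  have d1: "d0 - 1 \<noteq> 0" using ne by simp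
  have t3: "((\<lambda>y. ((\<rho> g y - y) / (y - p)) / (phi k0 y / (y - p))) \<longlongrightarrow> 0 / (d0 - 1)) FF"
    by (rule tendsto_divide[OF t1 t2 d1])
  have "1 / (2 * K) > 0" using K(1) by simp
  then have ev1: "eventually (\<lambda>y. \<bar>((\<rho> g y - y) / (y - p)) / (phi k0 y / (y - p))\<bar> < 1 / (2 * K)) FF"
    using t3 unfolding tendsto_iff by (auto simp: dist_real_def)
  have ev2: "eventually (\<lambda>y. phi k0 y / (y - p) \<noteq> 0) FF"
    by (rule tendsto_imp_eventually_ne[OF t2 d1])
  show ?thesis
    using eventually_conj[OF ev_ne eventually_conj[OF ev1 ev2]]
  proof (rule eventually_mono)
    fix y assume A: "(y \<noteq> p \<and> y \<in> {0..1}) \<and> \<bar>((\<rho> g y - y) / (y - p)) / (phi k0 y / (y - p))\<bar> < 1 / (2 * K)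
       \<and> phi k0 y / (y - p) \<noteq> 0"
    define a where "a = \<rho> g y - y"
    define b where "b = phi k0 y"
    have tp: "y - p \<noteq> 0" using A by simp
    have b0: "b \<noteq> 0" using A unfolding b_def by auto
    have r: "(a / (y - p)) / (b / (y - p)) = a / b" using tp b0 by (simp add: field_simps)
    have A3: "\<bar>(a / (y - p)) / (b / (y - p))\<bar> < 1 / (2 * K)" using A unfolding a_def b_def by blast
    have ab: "\<bar>a / b\<bar> < 1 / (2 * K)" using A3 unfolding r .
    have bK: "\<bar>b\<bar> \<le> K * Dm y" unfolding b_def using K(2)[OF k0] A by simp
    have "\<bar>a\<bar> = \<bar>a / b\<bar> * \<bar>b\<bar>" using b0 by (simp add: abs_divide)
    also have "\<dots> < (1 / (2 * K)) * \<bar>b\<bar>" using ab b0 by (intro mult_strict_right_mono) auto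
    also have "\<dots> \<le> (1 / (2 * K)) * (K * Dm y)" using bK K(1) by (intro mult_left_mono) auto
    also have "\<dots> = Dm y / 2" using K(1) by simp
    finally have "\<bar>a\<bar> < Dm y / 2" .
    then show "\<rho> g y - y < Dm y" unfolding a_def by linarith
  qed
qed


definition SD :: "(real \<Rightarrow> real) \<Rightarrow> bool" where
  "SD \<phi> \<longleftrightarrow> (\<forall>\<eta>>0. eventually (\<lambda>z. \<bar>\<phi> (snd z) - \<phi> (fst z)\<bar> \<le> \<eta> * \<bar>snd z - fst z\<bar>) (FF \<times>\<^sub>F FF))"

definition psi where "psi c x = (\<Sum>k\<in>{1..n}. c k * phi k x)"

definition PP where "PP c f \<longleftrightarrow> (\<forall>\<epsilon>>0. eventually (\<lambda>x. \<bar>f x - x - psi c x\<bar> \<le> \<epsilon> * del x) FF)"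

lemma SD_zero: "SD (\<lambda>x. 0)"
  unfolding SD_def by (intro allI impI always_eventually) simp

lemma SD_add: assumes "SD a" "SD b" shows "SD (\<lambda>x. a x + b x)"
  unfolding SD_def
proof (intro allI impI)
  fix \<eta> :: real assume e: "\<eta> > 0"
  have "eventually (\<lambda>z. \<bar>a (snd z) - a (fst z)\<bar> \<le> (\<eta>/2) * \<bar>snd z - fst z\<bar>) (FF \<times>\<^sub>F FF)"
    by (rule assms(1)[unfolded SD_def, rule_format]) (use e in simp)
  moreover have "eventually (\<lambda>z. \<bar>b (snd z) - b (fst z)\<bar> \<le> (\<eta>/2) * \<bar>snd z - fst z\<bar>) (FF \<times>\<^sub>F FF)"
    by (rule assms(2)[unfolded SD_def, rule_format]) (use e in simp)
  ultimately
  show "eventually (\<lambda>z. \<bar>a (snd z) + b (snd z) - (a (fst z) + b (fst z))\<bar> \<le> \<eta> * \<bar>snd z - fst z\<bar>) (FF \<times>\<^sub>F FF)"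
    by (rule eventually_elim2) arith
qed

lemma SD_cmult: assumes "SD a" shows "SD (\<lambda>x. c * a x)"
  unfolding SD_def
proof (intro allI impI)
  fix \<eta> :: real assume e: "\<eta> > 0"
  have "eventually (\<lambda>z. \<bar>a (snd z) - a (fst z)\<bar> \<le> (\<eta>/(\<bar>c\<bar>+1)) * \<bar>snd z - fst z\<bar>) (FF \<times>\<^sub>F FF)"
    by (rule assms(1)[unfolded SD_def, rule_format]) (use e in \<open>simp add: add_pos_nonneg\<close>)
  then show "eventually (\<lambda>z. \<bar>c * a (snd z) - c * a (fst z)\<bar> \<le> \<eta> * \<bar>snd z - fst z\<bar>) (FF \<times>\<^sub>F FF)"
  proof (rule eventually_mono)
    fix z :: "real \<times> real"
    assume A: "\<bar>a (snd z) - a (fst z)\<bar> \<le> (\<eta>/(\<bar>c\<bar>+1)) * \<bar>snd z - fst z\<bar>"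
    have "\<bar>c * a (snd z) - c * a (fst z)\<bar> = \<bar>c\<bar> * \<bar>a (snd z) - a (fst z)\<bar>"
      by (simp add: abs_mult[symmetric] right_diff_distrib)
    also have "\<dots> \<le> \<bar>c\<bar> * ((\<eta>/(\<bar>c\<bar>+1)) * \<bar>snd z - fst z\<bar>)" by (rule mult_left_mono[OF A abs_ge_zero])
    also have "\<dots> = (\<bar>c\<bar>/(\<bar>c\<bar>+1)) * (\<eta> * \<bar>snd z - fst z\<bar>)" by simp
    also have "\<dots> \<le> 1 * (\<eta> * \<bar>snd z - fst z\<bar>)" using e by (intro mult_right_mono) auto
    finally show "\<bar>c * a (snd z) - c * a (fst z)\<bar> \<le> \<eta> * \<bar>snd z - fst z\<bar>" by simp
  qed
qed

lemma SD_abs: assumes "SD a" shows "SD (\<lambda>x. \<bar>a x\<bar>)"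
  unfolding SD_def
proof (intro allI impI)
  fix \<eta> :: real assume e: "\<eta> > 0"
  have "eventually (\<lambda>z. \<bar>a (snd z) - a (fst z)\<bar> \<le> \<eta> * \<bar>snd z - fst z\<bar>) (FF \<times>\<^sub>F FF)"
    using assms e unfolding SD_def by auto
  then show "eventually (\<lambda>z. \<bar>\<bar>a (snd z)\<bar> - \<bar>a (fst z)\<bar>\<bar> \<le> \<eta> * \<bar>snd z - fst z\<bar>) (FF \<times>\<^sub>F FF)"
    by (rule eventually_mono) (use abs_triangle_ineq3 order_trans in blast)
qed

lemma SD_sum: "finite A \<Longrightarrow> (\<And>i. i \<in> A \<Longrightarrow> SD (f i)) \<Longrightarrow> SD (\<lambda>x. \<Sum>i\<in>A. f i x)"
proof (induct A rule: finite_induct)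
  case empty then show ?case using SD_zero by simp
next
  case (insert i A)
  then have "SD (\<lambda>x. f i x + (\<Sum>i\<in>A. f i x))" by (intro SD_add) auto
  then show ?case using insert by simp
qed

lemma SD_along:
  assumes "SD \<phi>" "filterlim g FF FF" "\<eta> > 0"
  shows "eventually (\<lambda>x. \<bar>\<phi> (g x) - \<phi> x\<bar> \<le> \<eta> * \<bar>g x - x\<bar>) FF"
proof -
  have lim: "filterlim (\<lambda>x. (x, g x)) (FF \<times>\<^sub>F FF) FF" by (rule filterlim_Pair[OF filterlim_ident assms(2)])
  have "eventually (\<lambda>z. \<bar>\<phi> (snd z) - \<phi> (fst z)\<bar> \<le> \<eta> * \<bar>snd z - fst z\<bar>) (FF \<times>\<^sub>F FF)"
    using assms unfolding SD_def by auto
  then have "eventually (\<lambda>x. (\<lambda>z. \<bar>\<phi> (snd z) - \<phi> (fst z)\<bar> \<le> \<eta> * \<bar>snd z - fst z\<bar>) (x, g x)) FF"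
    using lim unfolding filterlim_iff by blast
  then show ?thesis by simp
qed

lemma del_nonneg: "0 \<le> del x" unfolding del_def by (simp add: sum_nonneg)

lemma phi_le_del: "k \<in> {1..n} \<Longrightarrow> \<bar>phi k x\<bar> \<le> del x"
  unfolding del_def by (rule member_le_sum) auto

lemma psi_bound: "\<bar>psi c x\<bar> \<le> (\<Sum>k\<in>{1..n}. \<bar>c k\<bar>) * del x"
proof -
  have "\<bar>psi c x\<bar> \<le> (\<Sum>k\<in>{1..n}. \<bar>c k * phi k x\<bar>)" unfolding psi_def by (rule sum_abs)
  also have "\<dots> \<le> (\<Sum>k\<in>{1..n}. \<bar>c k\<bar> * del x)"
    by (rule sum_mono) (simp add: abs_mult mult_left_mono phi_le_del)
  also have "\<dots> = (\<Sum>k\<in>{1..n}. \<bar>c k\<bar>) * del x" by (simp add: sum_distrib_right)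
  finally show ?thesis .
qed

lemma psi_add: "psi (\<lambda>k. c1 k + c2 k) x = psi c1 x + psi c2 x"
  unfolding psi_def by (simp add: distrib_right sum.distrib)

lemma psi_neg: "psi (\<lambda>k. - c k) x = - psi c x"
  unfolding psi_def by (simp add: sum_negf)

lemma psi_zero: "psi (\<lambda>k. 0) x = 0"
  unfolding psi_def by simp

lemma psi_unit: "k \<in> {1..n} \<Longrightarrow> psi (\<lambda>j. if j = k then 1 else 0) x = phi k x"
proof -
  assume k: "k \<in> {1..n}"
  have "psi (\<lambda>j. if j = k then 1 else 0) x = (\<Sum>j\<in>{1..n}. if j = k then phi j x else 0)"
    unfolding psi_def by (rule sum.cong) auto
  also have "\<dots> = phi k x" using k by (simp add: sum.delta)
  finally show ?thesis .
qed

lemma SD_phi: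
  assumes k: "k \<in> {1..n}" and d1: "(\<rho> (h k) has_real_derivative 1) FF"
  shows "SD (phi k)"
  unfolding SD_def
proof (intro allI impI)
  fix \<eta> :: real assume e: "\<eta> > 0"
  obtain f' where c: "continuous_on {0..1} f'"
    and d: "\<And>x. x \<in> {0..1} \<Longrightarrow> (\<rho> (h k) has_real_derivative f' x) (at x within {0..1})"
    using D1_deriv[OF rho_car[OF hk_car[OF k]]] by blast
  have f'p: "f' p = 1" using has_field_derivative_unique[OF d[OF p01] d1 FF_nontriv] .
  obtain r where r: "r > 0" "\<And>z. z \<in> {0..1} \<Longrightarrow> dist z p < r \<Longrightarrow> dist (f' z) (f' p) < \<eta>"
    using continuous_on_iff[THEN iffD1, rule_format, OF c p01 e] by blast
  define T where "T = {0..1::real} \<inter> ball p r"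
  have cT: "convex T" unfolding T_def by (simp add: convex_Int convex_ball)
  have der: "(phi k has_real_derivative (f' z - 1)) (at z within T)" if z: "z \<in> T" for z
  proof -
    have "(\<rho> (h k) has_real_derivative f' z) (at z within T)"
      using DERIV_subset[OF d] z unfolding T_def by auto
    then have "((\<lambda>x. \<rho> (h k) x - x) has_real_derivative (f' z - 1)) (at z within T)"
      by (intro DERIV_diff) (auto intro: DERIV_ident)
    then show ?thesis unfolding phi_def[abs_def] by simp
  qed
  have bnd: "\<bar>f' z - 1\<bar> \<le> \<eta>" if z: "z \<in> T" for z
    using r(2)[of z] z f'p unfolding T_def by (auto simp: dist_real_def abs_minus_commute)
  have lip: "\<bar>phi k x - phi k y\<bar> \<le> \<eta> * \<bar>x - y\<bar>" if "x \<in> T" "y \<in> T" for x y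
    by (rule real_lip_bound[OF cT der bnd that])
  have evT: "eventually (\<lambda>x. x \<in> T) FF"
    unfolding eventually_at T_def using r(1) by (intro exI[of _ r]) (auto simp: dist_commute)
  show "eventually (\<lambda>z. \<bar>phi k (snd z) - phi k (fst z)\<bar> \<le> \<eta> * \<bar>snd z - fst z\<bar>) (FF \<times>\<^sub>F FF)"
    unfolding eventually_prod_same
    by (rule exI[of _ "\<lambda>x. x \<in> T"]) (auto simp: evT lip)
qed


lemma PP_inst: "PP c f \<Longrightarrow> \<epsilon> > 0 \<Longrightarrow> eventually (\<lambda>x. \<bar>f x - x - psi c x\<bar> \<le> \<epsilon> * del x) FF"
  unfolding PP_def by blast

lemma PP_comp:
  assumes SDp: "\<And>c. SD (psi c)" and SDd: "SD del"
    and f: "PP c1 f" and g: "PP c2 g" and lg: "filterlim g FF FF"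
  shows "PP (\<lambda>k. c1 k + c2 k) (f \<circ> g)"
  unfolding PP_def
proof (intro allI impI)
  fix \<epsilon> :: real assume e: "\<epsilon> > 0"
  define B2 where "B2 = (\<Sum>k\<in>{1..n}. \<bar>c2 k\<bar>)"
  have B2: "B2 \<ge> 0" unfolding B2_def by (simp add: sum_nonneg)
  have E1: "eventually (\<lambda>x. \<bar>g x - x - psi c2 x\<bar> \<le> 1 * del x) FF" by (rule PP_inst[OF g]) simp
  have E2: "eventually (\<lambda>x. \<bar>del (g x) - del x\<bar> \<le> (1/(B2+1)) * \<bar>g x - x\<bar>) FF"
    by (rule SD_along[OF SDd lg]) (use B2 in simp)
  have "eventually (\<lambda>y. \<bar>f y - y - psi c1 y\<bar> \<le> (\<epsilon>/6) * del y) FF" by (rule PP_inst[OF f]) (use e in simp)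
  then have E3: "eventually (\<lambda>x. \<bar>f (g x) - g x - psi c1 (g x)\<bar> \<le> (\<epsilon>/6) * del (g x)) FF"
    using lg unfolding filterlim_iff by blast
  have E4: "eventually (\<lambda>x. \<bar>psi c1 (g x) - psi c1 x\<bar> \<le> (\<epsilon>/(3*(B2+1))) * \<bar>g x - x\<bar>) FF"
    by (rule SD_along[OF SDp lg]) (use e B2 in simp)
  have E5: "eventually (\<lambda>x. \<bar>g x - x - psi c2 x\<bar> \<le> (\<epsilon>/3) * del x) FF" by (rule PP_inst[OF g]) (use e in simp)
  show "eventually (\<lambda>x. \<bar>(f \<circ> g) x - x - psi (\<lambda>k. c1 k + c2 k) x\<bar> \<le> \<epsilon> * del x) FF"
    using eventually_conj[OF E1 eventually_conj[OF E2 eventually_conj[OF E3 eventually_conj[OF E4 E5]]]]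
  proof (rule eventually_mono)
    fix x assume H: "\<bar>g x - x - psi c2 x\<bar> \<le> 1 * del x \<and>
      \<bar>del (g x) - del x\<bar> \<le> (1/(B2+1)) * \<bar>g x - x\<bar> \<and>
      \<bar>f (g x) - g x - psi c1 (g x)\<bar> \<le> (\<epsilon>/6) * del (g x) \<and>
      \<bar>psi c1 (g x) - psi c1 x\<bar> \<le> (\<epsilon>/(3*(B2+1))) * \<bar>g x - x\<bar> \<and>
      \<bar>g x - x - psi c2 x\<bar> \<le> (\<epsilon>/3) * del x"
    then have e1: "\<bar>g x - x - psi c2 x\<bar> \<le> del x"
      and e2: "\<bar>del (g x) - del x\<bar> \<le> (1/(B2+1)) * \<bar>g x - x\<bar>"
      and e3: "\<bar>f (g x) - g x - psi c1 (g x)\<bar> \<le> (\<epsilon>/6) * del (g x)"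
      and e4: "\<bar>psi c1 (g x) - psi c1 x\<bar> \<le> (\<epsilon>/(3*(B2+1))) * \<bar>g x - x\<bar>"
      and e5: "\<bar>g x - x - psi c2 x\<bar> \<le> (\<epsilon>/3) * del x" by auto
    define d where "d = del x"
    have dn: "0 \<le> d" unfolding d_def by (rule del_nonneg)
    have pb: "\<bar>psi c2 x\<bar> \<le> B2 * d" unfolding B2_def d_def by (rule psi_bound)
    have a1: "\<bar>g x - x\<bar> \<le> (B2+1) * d" using e1 pb unfolding d_def[symmetric] by (simp add: distrib_right)
    have "(1/(B2+1)) * \<bar>g x - x\<bar> \<le> (1/(B2+1)) * ((B2+1) * d)" using a1 B2 by (intro mult_left_mono) auto
    also have "\<dots> = d" using B2 by simp
    finally have a2: "(1/(B2+1)) * \<bar>g x - x\<bar> \<le> d" .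
    have a3: "del (g x) \<le> 2 * d" using e2 a2 unfolding d_def by arith
    have a4: "(\<epsilon>/6) * del (g x) \<le> (\<epsilon>/6) * (2 * d)" using a3 e by (intro mult_left_mono) auto
    have "(\<epsilon>/(3*(B2+1))) * \<bar>g x - x\<bar> \<le> (\<epsilon>/(3*(B2+1))) * ((B2+1) * d)" using a1 e B2 by (intro mult_left_mono) auto
    also have "\<dots> = (\<epsilon>/3) * d" using B2 by (simp add: field_simps)
    finally have a5: "(\<epsilon>/(3*(B2+1))) * \<bar>g x - x\<bar> \<le> (\<epsilon>/3) * d" .
    have dec: "(f \<circ> g) x - x - psi (\<lambda>k. c1 k + c2 k) x =
        (f (g x) - g x - psi c1 (g x)) + (psi c1 (g x) - psi c1 x) + (g x - x - psi c2 x)"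
      by (simp add: psi_add)
    have "(\<epsilon>/6) * (2 * d) + (\<epsilon>/3) * d + (\<epsilon>/3) * d = \<epsilon> * d" by simp
    then show "\<bar>(f \<circ> g) x - x - psi (\<lambda>k. c1 k + c2 k) x\<bar> \<le> \<epsilon> * del x"
      unfolding dec d_def[symmetric] using e3 e4 e5 a4 a5 unfolding d_def[symmetric] by arith
  qed
qed

lemma PP_inv:
  assumes SDp: "\<And>c. SD (psi c)" and SDd: "SD del"
    and f: "PP c f" and lg: "filterlim g FF FF" and fg: "\<And>x. f (g x) = x"
  shows "PP (\<lambda>k. - c k) g"
  unfolding PP_def
proof (intro allI impI)
  fix \<epsilon> :: real assume e: "\<epsilon> > 0"
  define B where "B = (\<Sum>k\<in>{1..n}. \<bar>c k\<bar>)"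
  have B: "B \<ge> 0" unfolding B_def by (simp add: sum_nonneg)
  have "eventually (\<lambda>y. \<bar>f y - y - psi c y\<bar> \<le> 1 * del y) FF" by (rule PP_inst[OF f]) simp
  then have E1: "eventually (\<lambda>x. \<bar>f (g x) - g x - psi c (g x)\<bar> \<le> 1 * del (g x)) FF"
    using lg unfolding filterlim_iff by blast
  have E2: "eventually (\<lambda>x. \<bar>del (g x) - del x\<bar> \<le> (1/(2*(B+1))) * \<bar>g x - x\<bar>) FF"
    by (rule SD_along[OF SDd lg]) (use B in simp)
  have "eventually (\<lambda>y. \<bar>f y - y - psi c y\<bar> \<le> (\<epsilon>/4) * del y) FF" by (rule PP_inst[OF f]) (use e in simp)
  then have E3: "eventually (\<lambda>x. \<bar>f (g x) - g x - psi c (g x)\<bar> \<le> (\<epsilon>/4) * del (g x)) FF"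
    using lg unfolding filterlim_iff by blast
  have E4: "eventually (\<lambda>x. \<bar>psi c (g x) - psi c x\<bar> \<le> (\<epsilon>/(4*(B+1))) * \<bar>g x - x\<bar>) FF"
    by (rule SD_along[OF SDp lg]) (use e B in simp)
  show "eventually (\<lambda>x. \<bar>g x - x - psi (\<lambda>k. - c k) x\<bar> \<le> \<epsilon> * del x) FF"
    using eventually_conj[OF E1 eventually_conj[OF E2 eventually_conj[OF E3 E4]]]
  proof (rule eventually_mono)
    fix x assume H: "\<bar>f (g x) - g x - psi c (g x)\<bar> \<le> 1 * del (g x) \<and>
      \<bar>del (g x) - del x\<bar> \<le> (1/(2*(B+1))) * \<bar>g x - x\<bar> \<and>
      \<bar>f (g x) - g x - psi c (g x)\<bar> \<le> (\<epsilon>/4) * del (g x) \<and>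
      \<bar>psi c (g x) - psi c x\<bar> \<le> (\<epsilon>/(4*(B+1))) * \<bar>g x - x\<bar>"
    define y where "y = g x"
    define d where "d = del x"
    define dy where "dy = del y"
    have fy: "f y = x" unfolding y_def by (rule fg)
    have e1: "\<bar>x - y - psi c y\<bar> \<le> dy"
      and e2: "\<bar>dy - d\<bar> \<le> (1/(2*(B+1))) * \<bar>y - x\<bar>"
      and e3: "\<bar>x - y - psi c y\<bar> \<le> (\<epsilon>/4) * dy"
      and e4: "\<bar>psi c y - psi c x\<bar> \<le> (\<epsilon>/(4*(B+1))) * \<bar>y - x\<bar>"
      using H fy unfolding y_def[symmetric] d_def[symmetric] dy_def[symmetric] by auto
    have dn: "0 \<le> d" unfolding d_def by (rule del_nonneg)
    have pb: "\<bar>psi c y\<bar> \<le> B * dy" unfolding B_def dy_def by (rule psi_bound)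
    have a1: "\<bar>y - x\<bar> \<le> (B+1) * dy" using e1 pb by (simp add: distrib_right)
    have "(1/(2*(B+1))) * \<bar>y - x\<bar> \<le> (1/(2*(B+1))) * ((B+1) * dy)" using a1 B by (intro mult_left_mono) auto
    also have "\<dots> = dy / 2" using B by (simp add: field_simps)
    finally have a2: "(1/(2*(B+1))) * \<bar>y - x\<bar> \<le> dy / 2" .
    have a3: "dy \<le> 2 * d" using e2 a2 by arith
    have a1': "\<bar>y - x\<bar> \<le> (B+1) * (2 * d)" using a1 a3 B by (smt (verit) mult_left_mono)
    have a4: "(\<epsilon>/4) * dy \<le> (\<epsilon>/4) * (2 * d)" using a3 e by (intro mult_left_mono) auto
    have "(\<epsilon>/(4*(B+1))) * \<bar>y - x\<bar> \<le> (\<epsilon>/(4*(B+1))) * ((B+1) * (2 * d))" using a1' e B by (intro mult_left_mono) auto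
    also have "\<dots> = (\<epsilon>/2) * d" using B by (simp add: field_simps)
    finally have a5: "(\<epsilon>/(4*(B+1))) * \<bar>y - x\<bar> \<le> (\<epsilon>/2) * d" .
    have dec: "g x - x - psi (\<lambda>k. - c k) x = - (x - y - psi c y) - (psi c y - psi c x)"
      unfolding y_def by (simp add: psi_neg)
    have "(\<epsilon>/4) * (2 * d) + (\<epsilon>/2) * d = \<epsilon> * d" by simp
    then show "\<bar>g x - x - psi (\<lambda>k. - c k) x\<bar> \<le> \<epsilon> * del x"
      unfolding dec d_def[symmetric] using e3 e4 a4 a5 by arith
  qed
qed


lemma PP_id: "PP (\<lambda>k. 0) id"
  unfolding PP_def psi_zero by (intro allI impI always_eventually) (simp add: del_nonneg)

lemma PP_gen: "k \<in> {1..n} \<Longrightarrow> PP (\<lambda>j. if j = k then 1 else 0) (\<rho> (h k))"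
  unfolding PP_def psi_unit by (intro allI impI always_eventually) (simp add: del_nonneg phi_def)

lemma PP_cong: "PP c f \<Longrightarrow> c = c' \<Longrightarrow> PP c' f" by simp

context
  assumes caseB: "\<forall>k\<in>{1..n}. (\<rho> (h k) has_real_derivative 1) FF"
begin

lemma SDp: "SD (psi c)"
  unfolding psi_def[abs_def]
  by (rule SD_sum) (auto intro!: SD_cmult SD_phi caseB[rule_format])

lemma SDd: "SD del"
  unfolding del_def[abs_def]
  by (rule SD_sum) (auto intro!: SD_abs SD_phi caseB[rule_format])

lemma PP_HH: "a \<in> HH \<Longrightarrow> \<exists>c. PP c (\<rho> a)"
proof (induct a rule: generate.induct)
  case one show ?case unfolding rho_one using PP_id by blast
next
  case (incl g)
  then obtain k where k: "k \<in> {1..n}" "g = h k" by blast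
  then show ?case using PP_gen by blast
next
  case (inv g)
  then obtain k where k: "k \<in> {1..n}" "g = h k" by blast
  have "PP (\<lambda>j. - (if j = k then 1 else 0)) (\<rho> (inv\<^bsub>G\<^esub> (h k)))"
    by (rule PP_inv[OF SDp SDd PP_gen[OF k(1)] limF[OF hkinv_HH[OF k(1)]] rho_inv1[OF hk_car[OF k(1)]]])
  then show ?case using k by blast
next
  case (eng g1 g2)
  then obtain c1 c2 where c: "PP c1 (\<rho> g1)" "PP c2 (\<rho> g2)" by blast
  have "g1 \<in> carrier G" "g2 \<in> carrier G" using eng HH_sub by auto
  then have "\<rho> (g1 \<otimes>\<^bsub>G\<^esub> g2) = \<rho> g1 \<circ> \<rho> g2" by (rule rho_mult)
  moreover have "PP (\<lambda>k. c1 k + c2 k) (\<rho> g1 \<circ> \<rho> g2)"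
    by (rule PP_comp[OF SDp SDd c(1) c(2) limF[OF eng(3)]])
  ultimately show ?case by metis
qed

lemma PP_comm: "g \<in> derived_set G HH \<Longrightarrow> PP (\<lambda>k. 0) (\<rho> g)"
proof -
  assume "g \<in> derived_set G HH"
  then obtain a b where ab: "a \<in> HH" "b \<in> HH" and g: "g = a \<otimes>\<^bsub>G\<^esub> b \<otimes>\<^bsub>G\<^esub> inv\<^bsub>G\<^esub> a \<otimes>\<^bsub>G\<^esub> inv\<^bsub>G\<^esub> b" by blast
  have ac: "a \<in> carrier G" "b \<in> carrier G" using ab HH_sub by auto
  have iH: "inv\<^bsub>G\<^esub> a \<in> HH" "inv\<^bsub>G\<^esub> b \<in> HH" using ab HH_subgroup by (auto intro: subgroup.m_inv_closed)
  have iC: "inv\<^bsub>G\<^esub> a \<in> carrier G" "inv\<^bsub>G\<^esub> b \<in> carrier G" using iH HH_sub by auto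
  obtain ca cb where ca: "PP ca (\<rho> a)" and cb: "PP cb (\<rho> b)" using PP_HH ab by blast
  have ia: "PP (\<lambda>k. - ca k) (\<rho> (inv\<^bsub>G\<^esub> a))"
    by (rule PP_inv[OF SDp SDd ca limF[OF iH(1)] rho_inv1[OF ac(1)]])
  have ib: "PP (\<lambda>k. - cb k) (\<rho> (inv\<^bsub>G\<^esub> b))"
    by (rule PP_inv[OF SDp SDd cb limF[OF iH(2)] rho_inv1[OF ac(2)]])
  have s1: "PP (\<lambda>k. ca k + cb k) (\<rho> a \<circ> \<rho> b)" by (rule PP_comp[OF SDp SDd ca cb limF[OF ab(2)]])
  have s2: "PP (\<lambda>k. (ca k + cb k) + - ca k) ((\<rho> a \<circ> \<rho> b) \<circ> \<rho> (inv\<^bsub>G\<^esub> a))"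
    using PP_comp[OF SDp SDd s1 ia limF[OF iH(1)]] by simp
  have s3: "PP (\<lambda>k. ((ca k + cb k) + - ca k) + - cb k) (((\<rho> a \<circ> \<rho> b) \<circ> \<rho> (inv\<^bsub>G\<^esub> a)) \<circ> \<rho> (inv\<^bsub>G\<^esub> b))"
    using PP_comp[OF SDp SDd s2 ib limF[OF iH(2)]] by simp
  have m1: "a \<otimes>\<^bsub>G\<^esub> b \<in> carrier G" using grp ac by (simp add: group.is_monoid monoid.m_closed)
  have m2: "a \<otimes>\<^bsub>G\<^esub> b \<otimes>\<^bsub>G\<^esub> inv\<^bsub>G\<^esub> a \<in> carrier G" using grp m1 iC by (simp add: group.is_monoid monoid.m_closed)
  have "\<rho> g = ((\<rho> a \<circ> \<rho> b) \<circ> \<rho> (inv\<^bsub>G\<^esub> a)) \<circ> \<rho> (inv\<^bsub>G\<^esub> b)"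
    unfolding g using rho_mult[OF m2 iC(2)] rho_mult[OF m1 iC(1)] rho_mult[OF ac] by simp
  moreover have "(\<lambda>k. ((ca k + cb k) + - ca k) + - cb k) = (\<lambda>k. 0)" by auto
  ultimately show ?thesis using s3 by simp
qed

lemma PP_derived: "g \<in> derived G HH \<Longrightarrow> PP (\<lambda>k. 0) (\<rho> g)"
  unfolding derived_def
proof (induct g rule: generate.induct)
  case one show ?case unfolding rho_one by (rule PP_id)
next
  case (incl g) then show ?case by (rule PP_comm)
next
  case (inv g)
  have gH: "g \<in> HH" using inv derived_HH unfolding derived_def by (blast intro: generate.incl)
  then have gc: "g \<in> carrier G" using HH_sub by blast
  have iH: "inv\<^bsub>G\<^esub> g \<in> HH" using gH HH_subgroup by (auto intro: subgroup.m_inv_closed)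
  have "PP (\<lambda>k. - 0) (\<rho> (inv\<^bsub>G\<^esub> g))"
    by (rule PP_inv[OF SDp SDd PP_comm[OF inv] limF[OF iH] rho_inv1[OF gc]])
  then show ?case by simp
next
  case (eng g1 g2)
  have "g1 \<in> HH" "g2 \<in> HH" using eng derived_HH unfolding derived_def by auto
  then have gc: "g1 \<in> carrier G" "g2 \<in> carrier G" using HH_sub by auto
  have "PP (\<lambda>k. 0 + 0) (\<rho> g1 \<circ> \<rho> g2)"
    by (rule PP_comp[OF SDp SDd eng(2) eng(4) limF[OF \<open>g2 \<in> HH\<close>]])
  then show ?case by (simp only: rho_mult[OF gc] add_0_left)
qed

lemma caseB_ev: "g \<in> derived G HH \<Longrightarrow> eventually (\<lambda>x. x \<notin> fixset \<rho> HH \<longrightarrow> \<rho> g x - x < Dm x) FF"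
proof -
  assume g: "g \<in> derived G HH"
  obtain K where K: "K > 0" "\<And>k x. k \<in> {1..n} \<Longrightarrow> x \<in> {0..1} \<Longrightarrow> \<bar>phi k x\<bar> \<le> K * Dm x"
    using phi_bound by blast
  define \<epsilon> where "\<epsilon> = 1 / (2 * (real n * K + 1))"
  have nK: "real n * K \<ge> 0" using K by simp
  have e: "\<epsilon> > 0" unfolding \<epsilon>_def using nK by simp
  have E: "eventually (\<lambda>x. \<bar>\<rho> g x - x - psi (\<lambda>k. 0) x\<bar> \<le> \<epsilon> * del x) FF"
    by (rule PP_inst[OF PP_derived[OF g] e])
  show ?thesis using eventually_conj[OF ev_ne E]
  proof (rule eventually_mono, intro impI)
    fix x assume H: "(x \<noteq> p \<and> x \<in> {0..1}) \<and> \<bar>\<rho> g x - x - psi (\<lambda>k. 0) x\<bar> \<le> \<epsilon> * del x"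
      and nf: "x \<notin> fixset \<rho> HH"
    have x01: "x \<in> {0..1}" using H by simp
    define D where "D = Dm x"
    have D: "D > 0" unfolding D_def using Dm_pos[OF x01 nf] .
    have "del x \<le> of_nat (card {1..n}) * (K * D)"
      unfolding del_def D_def by (rule sum_bounded_above) (use K(2) x01 in auto)
    then have dl: "del x \<le> real n * (K * D)" by simp
    have "\<bar>\<rho> g x - x\<bar> \<le> \<epsilon> * del x" using H by (simp add: psi_zero)
    also have "\<dots> \<le> \<epsilon> * (real n * (K * D))" using dl e by (intro mult_left_mono) auto
    also have "\<dots> \<le> \<epsilon> * ((real n * K + 1) * D)" using e D by (intro mult_left_mono) (auto simp: algebra_simps)
    also have "\<dots> = D / 2" unfolding \<epsilon>_def using nK by (simp add: field_simps)
    finally show "\<rho> g x - x < Dm x" using D unfolding D_def by linarith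
  qed
qed

end

lemma main_ev: "g \<in> derived G HH \<Longrightarrow> eventually (\<lambda>x. x \<notin> fixset \<rho> HH \<longrightarrow> \<rho> g x - x < Dm x) FF"
proof (cases "\<forall>k\<in>{1..n}. (\<rho> (h k) has_real_derivative 1) FF")
  case True
  assume "g \<in> derived G HH"
  then show ?thesis by (rule caseB_ev[OF True])
next
  case False
  assume g: "g \<in> derived G HH"
  from False obtain k0 where k0: "k0 \<in> {1..n}" "\<not> (\<rho> (h k0) has_real_derivative 1) FF" by blast
  obtain d0 where d0: "(\<rho> (h k0) has_real_derivative d0) FF" using deriv_ex[OF hk_car[OF k0(1)]] by blast
  have "d0 \<noteq> 1" using d0 k0(2) by auto
  from caseA[OF k0(1) d0 this g] show ?thesis by (rule eventually_mono) simp
qed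


end

lemma fixset_closed:
  assumes grp: "group G" and hom: "\<rho> \<in> hom G Diff1_plus_group" and A: "A \<subseteq> carrier G"
  shows "closed (fixset \<rho> A)"
proof -
  have eq: "fixset \<rho> A = {0..1} \<inter> (\<Inter>g\<in>A. {x \<in> {0..1}. (\<lambda>x. \<rho> g x - x) x = 0})"
    unfolding fixset_def by auto
  have "closed {x \<in> {0..1}. (\<lambda>x. \<rho> g x - x) x = 0}" if g: "g \<in> A" for g
  proof -
    have "\<rho> g \<in> carrier Diff1_plus_group" using hom g A unfolding hom_def by auto
    then have "continuous_on {0..1} (\<rho> g)" by (rule D1_cont)
    then have "continuous_on {0..1} (\<lambda>x. \<rho> g x - x)" by (intro continuous_intros)
    then show ?thesis by (rule continuous_closed_preimage_constant) simp
  qed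
  then show ?thesis unfolding eq by (intro closed_Int closed_INT) auto
qed

theorem lemma2p7:
  fixes G :: "('a, 'b) monoid_scheme"
    and \<rho> :: "'a \<Rightarrow> real \<Rightarrow> real"
    and h :: "nat \<Rightarrow> 'a" and n :: nat
    and p :: real and ps :: "nat \<Rightarrow> real"
  assumes "group G"
    and "\<rho> \<in> hom G Diff1_plus_group"
    and "inj_on \<rho> (carrier G)"
    and "h ` {1..n} \<subseteq> carrier G"
    and "p \<in> frontier (fixset \<rho> (generate G (h ` {1..n})))"
    and "\<And>m. ps m \<in> {0..1} - fixset \<rho> (generate G (h ` {1..n}))"
    and "ps \<longlonglongrightarrow> p"
  shows "\<exists>k :: nat \<Rightarrow> nat. \<exists>e :: nat \<Rightarrow> int.
           (\<forall>m. k m \<in> {1..n} \<and> e m \<in> {1, -1}) \<and>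
           (\<forall>g \<in> derived G (generate G (h ` {1..n})).
              \<exists>M. \<forall>m\<ge>M. \<rho> g (ps m) < \<rho> (h (k m) [^]\<^bsub>G\<^esub> e m) (ps m))"
proof -
  have sub: "generate G (h ` {1..n}) \<subseteq> carrier G"
    by (rule subsetI) (rule group.generate_in_carrier[OF assms(1) assms(4)])
  have cl: "closed (fixset \<rho> (generate G (h ` {1..n})))"
    by (rule fixset_closed[OF assms(1) assms(2) sub])
  have pfix: "p \<in> fixset \<rho> (generate G (h ` {1..n}))"
    using assms(5) closure_closed[OF cl] unfolding frontier_def by blast
  interpret S: setting G \<rho> h n p by (rule setting.intro[OF assms(1) assms(2) assms(4) pfix])
  have ps0: "ps 0 \<in> {0..1}" "ps 0 \<notin> fixset \<rho> (generate G (h ` {1..n}))" using assms(6)[of 0] by auto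
  obtain k00 where k00: "k00 \<in> {1..n}" using S.nonfix_gen[OF ps0] by blast
  define Opt where "Opt = {1..n} \<times> {1::int, -1}"
  have fOpt: "finite Opt" unfolding Opt_def by simp
  have nOpt: "Opt \<noteq> {}" unfolding Opt_def using k00 by blast
  have ex: "\<forall>m. \<exists>ke. ke \<in> Opt \<and> \<rho> (h (fst ke) [^]\<^bsub>G\<^esub> snd ke) (ps m) - ps m = S.Dm (ps m)"
  proof
    fix m
    let ?F = "\<lambda>(k,e). \<rho> (h k [^]\<^bsub>G\<^esub> (e::int)) (ps m) - ps m"
    have "Max (?F ` Opt) \<in> ?F ` Opt" using fOpt nOpt by (intro Max_in) auto
    then obtain ke where ke: "ke \<in> Opt" "Max (?F ` Opt) = ?F ke" by blast
    have "S.Dm (ps m) = Max (?F ` Opt)" unfolding S.Dm_def Opt_def by simp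
    then show "\<exists>ke. ke \<in> Opt \<and> \<rho> (h (fst ke) [^]\<^bsub>G\<^esub> snd ke) (ps m) - ps m = S.Dm (ps m)"
      using ke by (intro exI[of _ ke]) (auto split: prod.splits)
  qed
  from choice[OF ex] obtain sel where sel: "\<And>m. sel m \<in> Opt"
    "\<And>m. \<rho> (h (fst (sel m)) [^]\<^bsub>G\<^esub> snd (sel m)) (ps m) - ps m = S.Dm (ps m)" by blast
  have lim: "filterlim ps (at p within {0..1}) sequentially"
  proof (rule filterlim_at_withinI)
    show "filterlim ps (nhds p) sequentially" using assms(7) by simp
    have "ps m \<in> {0..1} - {p}" for m using assms(6)[of m] pfix by auto
    then show "eventually (\<lambda>m. ps m \<in> {0..1} - {p}) sequentially" by simp
  qed
  show ?thesis
  proof (rule exI[of _ "\<lambda>m. fst (sel m)"], rule exI[of _ "\<lambda>m. snd (sel m)"], intro conjI allI ballI)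
    fix m
    show "fst (sel m) \<in> {1..n}" "snd (sel m) \<in> {1, -1}" using sel(1)[of m] unfolding Opt_def by auto
  next
    fix g assume g: "g \<in> derived G (generate G (h ` {1..n}))"
    have "eventually (\<lambda>x. x \<notin> fixset \<rho> (generate G (h ` {1..n})) \<longrightarrow> \<rho> g x - x < S.Dm x) (at p within {0..1})"
      by (rule S.main_ev[OF g])
    then have "eventually (\<lambda>m. ps m \<notin> fixset \<rho> (generate G (h ` {1..n})) \<longrightarrow> \<rho> g (ps m) - ps m < S.Dm (ps m)) sequentially"
      using lim unfolding filterlim_iff by blast
    then obtain M where M: "\<And>m. m \<ge> M \<Longrightarrow> ps m \<notin> fixset \<rho> (generate G (h ` {1..n})) \<longrightarrow> \<rho> g (ps m) - ps m < S.Dm (ps m)"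
      unfolding eventually_sequentially by blast
    show "\<exists>M. \<forall>m\<ge>M. \<rho> g (ps m) < \<rho> (h (fst (sel m)) [^]\<^bsub>G\<^esub> snd (sel m)) (ps m)"
    proof (intro exI allI impI)
      fix m assume "m \<ge> M"
      then have "\<rho> g (ps m) - ps m < S.Dm (ps m)" using M assms(6)[of m] by blast
      then show "\<rho> g (ps m) < \<rho> (h (fst (sel m)) [^]\<^bsub>G\<^esub> snd (sel m)) (ps m)" using sel(2)[of m] by linarith
    qed
  qed
qed

end
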